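(* The map $\mathrm{mult}:\mathcal{F}_1\to\mathcal{F}_0$, $x\otimes y\mapsto xy$, is bounded and satisfies $\mathrm{mult}\,\mathrm{mult}^*=1$; hence it extends to a bounded linear map $L^2(M^2)\to L^2(M)$.
   Context: $M=\ell^\infty\text{-}\bigoplus_{i\in I}M_i$ with $M_i=\mathbb{C}^{d_i\times d_i}$, $M_0$ the finitely supported part, $E^i_{k,l}$ matrix units. $\omega$ is a delta-form: $\omega(x)=\mathrm{tr}_M(x\sigma)$ where $\mathrm{tr}_M(E^i_{k,l})=\delta_{k,l}d_i$ and $\sigma=\sum_i\sigma_i$ ($\sigma_i\in M_i$) is positive invertible with $\mathrm{Tr}(\sigma_i^{-1})=d_i$. $\mathcal{F}_n=M_0^{\otimes(n+1)}$ with inner product $\langle x_0\otimes\cdots\otimes x_n,y_0\otimes\cdots\otimes y_n\rangle=\prod_j\omega(y_j^*x_j)$; $L^2(M^{n+1})$ is its completion. *)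

theory Defs
  imports "HOL-Analysis.Analysis"
begin

text \<open>
  The index set I is a type 'i, with block sizes d :: 'i => nat.
  A matrix-unit index is a triple (i,k,l), meaning E^i_{k,l} (0-based, k,l < d i).
  An element x of M (or of any block-diagonal object) is a coefficient function
  x :: 'i * nat * nat => complex; x (i,k,l) is the (k,l) entry of the block x_i.
\<close>

type_synonym 'i mu = "'i \<times> nat \<times> nat"

definition valid :: "('i \<Rightarrow> nat) \<Rightarrow> 'i mu set" where
  "valid d = {(i,k,l). k < d i \<and> l < d i}"

definition supp :: "('a \<Rightarrow> complex) \<Rightarrow> 'a set" where
  "supp x = {a. x a \<noteq> 0}"

definition M0 :: "('i \<Rightarrow> nat) \<Rightarrow> ('i mu \<Rightarrow> complex) set" where
  "M0 d = {x. supp x \<subseteq> valid d \<and> finite (supp x)}"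

definition munit :: "'i mu \<Rightarrow> 'i mu \<Rightarrow> complex" where
  "munit a = (\<lambda>b. if b = a then 1 else 0)"

definition mmul :: "('i \<Rightarrow> nat) \<Rightarrow> ('i mu \<Rightarrow> complex) \<Rightarrow> ('i mu \<Rightarrow> complex) \<Rightarrow> 'i mu \<Rightarrow> complex" where
  "mmul d x y = (\<lambda>(i,k,l). \<Sum>m<d i. x (i,k,m) * y (i,m,l))"

definition madj :: "('i mu \<Rightarrow> complex) \<Rightarrow> 'i mu \<Rightarrow> complex" where
  "madj x = (\<lambda>(i,k,l). cnj (x (i,l,k)))"

definition trM :: "('i \<Rightarrow> nat) \<Rightarrow> ('i mu \<Rightarrow> complex) \<Rightarrow> complex" where
  "trM d x = (\<Sum>i\<in>fst ` supp x. of_nat (d i) * (\<Sum>k<d i. x (i,k,k)))"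

definition omega :: "('i \<Rightarrow> nat) \<Rightarrow> ('i mu \<Rightarrow> complex) \<Rightarrow> ('i mu \<Rightarrow> complex) \<Rightarrow> complex" where
  "omega d \<sigma> x = trM d (mmul d x \<sigma>)"

definition blk_positive :: "nat \<Rightarrow> (nat \<Rightarrow> nat \<Rightarrow> complex) \<Rightarrow> bool" where
  "blk_positive n A \<longleftrightarrow> (\<forall>v :: nat \<Rightarrow> complex.
      let q = (\<Sum>k<n. \<Sum>l<n. cnj (v k) * A k l * v l) in Im q = 0 \<and> Re q \<ge> 0)"

definition blk_mul :: "nat \<Rightarrow> (nat \<Rightarrow> nat \<Rightarrow> complex) \<Rightarrow> (nat \<Rightarrow> nat \<Rightarrow> complex) \<Rightarrow> nat \<Rightarrow> nat \<Rightarrow> complex" where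
  "blk_mul n A B = (\<lambda>k l. \<Sum>m<n. A k m * B m l)"

definition blk_is_inverse :: "nat \<Rightarrow> (nat \<Rightarrow> nat \<Rightarrow> complex) \<Rightarrow> (nat \<Rightarrow> nat \<Rightarrow> complex) \<Rightarrow> bool" where
  "blk_is_inverse n A B \<longleftrightarrow> (\<forall>k<n. \<forall>l<n.
      blk_mul n A B k l = (if k = l then 1 else 0) \<and> blk_mul n B A k l = (if k = l then 1 else 0))"

definition delta_form_density :: "('i \<Rightarrow> nat) \<Rightarrow> ('i mu \<Rightarrow> complex) \<Rightarrow> bool" where
  "delta_form_density d \<sigma> \<longleftrightarrow>
     supp \<sigma> \<subseteq> valid d \<and>
     (\<forall>i. blk_positive (d i) (\<lambda>k l. \<sigma> (i,k,l)) \<and>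
          (\<exists>\<tau>. blk_is_inverse (d i) (\<lambda>k l. \<sigma> (i,k,l)) \<tau> \<and> (\<Sum>k<d i. \<tau> k k) = of_nat (d i)))"

definition ip0 :: "('i \<Rightarrow> nat) \<Rightarrow> ('i mu \<Rightarrow> complex) \<Rightarrow> ('i mu \<Rightarrow> complex) \<Rightarrow> ('i mu \<Rightarrow> complex) \<Rightarrow> complex" where
  "ip0 d \<sigma> x y = omega d \<sigma> (mmul d (madj y) x)"

text \<open>F_1 = M_0 (algebraic tensor) M_0, represented by coefficient functions with respect
  to the basis E_a \<otimes> E_b of matrix-unit tensors; the elementary tensor x \<otimes> y is
  (a,b) \<mapsto> x a * y b.\<close>
definition F1 :: "('i \<Rightarrow> nat) \<Rightarrow> ('i mu \<times> 'i mu \<Rightarrow> complex) set" where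
  "F1 d = {X. supp X \<subseteq> valid d \<times> valid d \<and> finite (supp X)}"

definition tensor :: "('i mu \<Rightarrow> complex) \<Rightarrow> ('i mu \<Rightarrow> complex) \<Rightarrow> 'i mu \<times> 'i mu \<Rightarrow> complex" where
  "tensor x y = (\<lambda>(a,b). x a * y b)"

text \<open>Inner product on F_1: the sesquilinear extension of
  <x0 \<otimes> x1, y0 \<otimes> y1> = omega(y0^* x0) omega(y1^* x1).\<close>
definition ip1 :: "('i \<Rightarrow> nat) \<Rightarrow> ('i mu \<Rightarrow> complex) \<Rightarrow> ('i mu \<times> 'i mu \<Rightarrow> complex) \<Rightarrow> ('i mu \<times> 'i mu \<Rightarrow> complex) \<Rightarrow> complex" where
  "ip1 d \<sigma> X Y = (\<Sum>(a,b)\<in>supp X. \<Sum>(a',b')\<in>supp Y.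
      X (a,b) * cnj (Y (a',b')) * ip0 d \<sigma> (munit a) (munit a') * ip0 d \<sigma> (munit b) (munit b'))"

definition norm0 where "norm0 d \<sigma> x = sqrt (Re (ip0 d \<sigma> x x))"
definition norm1 where "norm1 d \<sigma> X = sqrt (Re (ip1 d \<sigma> X X))"

definition mult :: "('i \<Rightarrow> nat) \<Rightarrow> ('i mu \<times> 'i mu \<Rightarrow> complex) \<Rightarrow> 'i mu \<Rightarrow> complex" where
  "mult d X = (\<lambda>c. \<Sum>(a,b)\<in>supp X. X (a,b) * mmul d (munit a) (munit b) c)"

end

theory Submission
  imports Defs
begin

definition qf :: "nat \<Rightarrow> (nat \<Rightarrow> nat \<Rightarrow> complex) \<Rightarrow> (nat \<Rightarrow> complex) \<Rightarrow> complex" where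
  "qf n A v = (\<Sum>k<n. \<Sum>l<n. cnj (v k) * A k l * v l)"

lemma blk_positive_qf: "blk_positive n A \<longleftrightarrow> (\<forall>v. Im (qf n A v) = 0 \<and> Re (qf n A v) \<ge> 0)"
  by (simp add: blk_positive_def qf_def Let_def)

lemma qf_Suc_zero:
  assumes "\<And>m. m < Suc n \<Longrightarrow> B m n = 0 \<and> B n m = 0"
  shows "qf (Suc n) B v = qf n B v"
  using assms by (simp add: qf_def)

lemma qf_rank1:
  "qf N (\<lambda>k l. B k l + cnj (w k) * w l) v = qf N B v + cnj (\<Sum>k<N. w k * v k) * (\<Sum>l<N. w l * v l)"
  by (simp add: qf_def algebra_simps sum.distrib sum_distrib_left sum_distrib_right)

lemma sum_one:
  fixes n :: nat
  assumes "k < n" "\<And>j. j < n \<Longrightarrow> j \<noteq> k \<Longrightarrow> f j = 0"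
  shows "(\<Sum>j<n. f j) = (f k :: 'a::comm_monoid_add)"
proof -
  have "(\<Sum>j<n. f j) = (\<Sum>j\<in>{k}. f j)"
    by (rule sum.mono_neutral_right) (use assms in auto)
  then show ?thesis by simp
qed

lemma sum_two:
  fixes n :: nat
  assumes "k < n" "l < n" "k \<noteq> l" "\<And>j. j < n \<Longrightarrow> j \<noteq> k \<Longrightarrow> j \<noteq> l \<Longrightarrow> f j = 0"
  shows "(\<Sum>j<n. f j) = (f k + f l :: 'a::comm_monoid_add)"
proof -
  have "(\<Sum>j<n. f j) = (\<Sum>j\<in>{k,l}. f j)"
    by (rule sum.mono_neutral_right) (use assms in auto)
  then show ?thesis using assms(3) by simp
qed

lemma qf_one:
  assumes "k < n" "\<And>j. j \<noteq> k \<Longrightarrow> v j = 0"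
  shows "qf n A v = cnj (v k) * A k k * v k"
  unfolding qf_def
  apply (subst sum_one[where k=k]) using assms apply simp_all
  apply (subst sum_one[where k=k]) using assms apply simp_all
  done

lemma qf_two:
  assumes "k < n" "l < n" "k \<noteq> l" "\<And>j. j \<noteq> k \<Longrightarrow> j \<noteq> l \<Longrightarrow> v j = 0"
  shows "qf n A v = cnj (v k) * A k k * v k + cnj (v k) * A k l * v l + cnj (v l) * A l k * v k + cnj (v l) * A l l * v l"
  unfolding qf_def
  apply (subst sum_two[where k=k and l=l]) using assms apply simp_all
  apply (subst sum_two[where k=k and l=l]) using assms apply simp_all
  done

lemma psd_diag:
  assumes "blk_positive n A" "k < n"
  shows "Im (A k k) = 0" "Re (A k k) \<ge> 0"
proof -
  let ?v = "\<lambda>j. if j = k then 1 else 0 :: complex"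
  have "qf n A ?v = A k k" using qf_one[of k n ?v A] assms(2) by simp
  then show "Im (A k k) = 0" "Re (A k k) \<ge> 0" using assms(1) unfolding blk_positive_qf by metis+
qed

lemma psd_herm:
  assumes "blk_positive n A" "k < n" "l < n"
  shows "A l k = cnj (A k l)"
proof (cases "k = l")
  case True
  then show ?thesis using psd_diag[OF assms(1,2)] by (simp add: complex_eq_iff)
next
  case False
  let ?v1 = "\<lambda>j. if j = k then 1 else if j = l then 1 else 0 :: complex"
  let ?v2 = "\<lambda>j. if j = k then 1 else if j = l then \<i> else 0 :: complex"
  have q1: "qf n A ?v1 = A k k + A k l + A l k + A l l"
    using qf_two[of k n l ?v1 A] assms False by simp
  have q2: "qf n A ?v2 = A k k + A k l * \<i> - \<i> * A l k + A l l"
    using qf_two[of k n l ?v2 A] assms False by (simp add: algebra_simps)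
  have i1: "Im (qf n A ?v1) = 0" and i2: "Im (qf n A ?v2) = 0"
    using assms(1) unfolding blk_positive_qf by auto
  have d1: "Im (A k k) = 0" "Im (A l l) = 0" using psd_diag assms by auto
  show ?thesis using i1 i2 d1 unfolding q1 q2 by (simp add: complex_eq_iff)
qed

lemma qf_cong: "(\<And>j. j < n \<Longrightarrow> v j = v' j) \<Longrightarrow> qf n A v = qf n A v'"
  unfolding qf_def by (intro sum.cong refl) auto

lemma qf_Suc_ext: "v n = 0 \<Longrightarrow> qf (Suc n) A v = qf n A v"
  unfolding qf_def by simp

lemma psd_zero_col:
  assumes psd: "blk_positive (Suc n) A" and z: "A n n = 0" and m: "m < n"
  shows "A m n = 0"
proof -
  define c where "c = A m n"
  define a' where "a' = Re (A m m)"
  have am: "A m m = of_real a'" using psd_diag[OF psd, of m] m unfolding a'_def by (simp add: complex_eq_iff)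
  have a'0: "a' \<ge> 0" using psd_diag[OF psd, of m] m unfolding a'_def by simp
  have anm: "A n m = cnj c" using psd_herm[OF psd, of m n] m unfolding c_def by simp
  define t where "t = - c / of_real (a' + 1)"
  let ?v = "\<lambda>j. if j = m then t else if j = n then 1 else 0 :: complex"
  have q: "qf (Suc n) A ?v = cnj t * A m m * t + cnj t * c + A n m * t"
    using qf_two[of m "Suc n" n ?v A] m z unfolding c_def by simp
  have "Re (qf (Suc n) A ?v) \<ge> 0" using psd unfolding blk_positive_qf by auto
  then have "Re (cnj t * of_real a' * t + cnj t * c + cnj c * t) \<ge> 0" using q am anm by simp
  moreover have "Re (cnj t * of_real a' * t + cnj t * c + cnj c * t) = (cmod c)^2 * (- a' - 2) / (a' + 1)^2"
  proof -
    have b: "a' + 1 > 0" using a'0 by simp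
    have cc: "cnj c * c = of_real ((cmod c)^2)" using complex_norm_square[of c] by (simp add: mult.commute)
    have cc2: "c * cnj c = of_real (cmod c) * of_real (cmod c)"
      using complex_norm_square[of c] by (simp add: power2_eq_square)
    have cc3: "c * cnj c = (of_real (cmod c))^2"
      using complex_norm_square[of c] by simp
    have e1: "cnj t * of_real a' * t = of_real (a' * (cmod c)^2 / (a'+1)^2)"
      unfolding t_def using b by (simp add: field_simps power2_eq_square cc2)
    have e2: "cnj t * c = - of_real ((cmod c)^2 / (a'+1))"
      unfolding t_def using b by (simp add: field_simps cc cc3)
    have e3: "cnj c * t = - of_real ((cmod c)^2 / (a'+1))"
      unfolding t_def using b by (simp add: field_simps cc cc3)
    have r: "a' * (cmod c)^2 / (a'+1)^2 - (cmod c)^2 / (a'+1) - (cmod c)^2 / (a'+1) = (cmod c)^2 * (- a' - 2) / (a' + 1)^2"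
    proof -
      have r0: "\<And>x bb::real. bb > 0 \<Longrightarrow> (bb - 1) * x / bb^2 - x/bb - x/bb = x * (-(bb-1) - 2) / bb^2"
        by (simp add: field_simps power2_eq_square)
      from r0[OF b, of "(cmod c)^2"] show ?thesis by simp
    qed
    show ?thesis unfolding e1 e2 e3 using r by simp
  qed
  ultimately have "(cmod c)^2 * (- a' - 2) / (a' + 1)^2 \<ge> 0" by simp
  moreover have "(a' + 1)^2 > 0" using a'0 by simp
  ultimately have "(cmod c)^2 * (- a' - 2) \<ge> 0" by (simp add: zero_le_divide_iff)
  then have "(cmod c)^2 = 0"
  proof (rule contrapos_pp)
    assume "(cmod c)^2 \<noteq> 0"
    then have "(cmod c)^2 > 0" by simp
    then show "\<not> 0 \<le> (cmod c)^2 * (- a' - 2)" using a'0 by (simp add: mult_pos_neg not_le)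
  qed
  then show ?thesis unfolding c_def by simp
qed

lemma chol_step:
  assumes psd: "blk_positive (Suc n) A"
  obtains w where "\<And>m. m < Suc n \<Longrightarrow> A m n = cnj (w m) * w n \<and> A n m = cnj (w n) * w m"
    and "blk_positive n (\<lambda>k l. A k l - cnj (w k) * w l)"
proof (cases "A n n = 0")
  case True
  have z: "A m n = 0 \<and> A n m = 0" if "m < Suc n" for m
  proof (cases "m = n")
    case True then show ?thesis using \<open>A n n = 0\<close> by simp
  next
    case False
    then have "m < n" using that by simp
    then have "A m n = 0" using psd_zero_col[OF psd True] by simp
    moreover have "A n m = cnj (A m n)" using psd_herm[OF psd, of m n] \<open>m < n\<close> by simp
    ultimately show ?thesis by simp
  qed
  have "blk_positive n (\<lambda>k l. A k l - cnj (0::complex) * 0)"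
    unfolding blk_positive_qf
  proof
    fix v :: "nat \<Rightarrow> complex"
    let ?v = "v(n := 0)"
    have "qf n (\<lambda>k l. A k l - cnj (0::complex) * 0) v = qf n A ?v" by (simp, intro qf_cong, simp)
    also have "\<dots> = qf (Suc n) A ?v" by (simp add: qf_Suc_ext)
    finally show "Im (qf n (\<lambda>k l. A k l - cnj (0::complex) * 0) v) = 0 \<and> 0 \<le> Re (qf n (\<lambda>k l. A k l - cnj (0::complex) * 0) v)"
      using psd unfolding blk_positive_qf by simp
  qed
  then show ?thesis using that[of "\<lambda>_. 0"] z by simp
next
  case False
  define s where "s = sqrt (Re (A n n))"
  have im: "Im (A n n) = 0" and re: "Re (A n n) \<ge> 0" using psd_diag[OF psd, of n] by auto
  then have repos: "Re (A n n) > 0" using False by (simp add: complex_eq_iff)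
  then have s0: "s > 0" unfolding s_def by simp
  have ann: "A n n = of_real (s * s)" using im re unfolding s_def by (simp add: complex_eq_iff)
  define w where "w l = A n l / of_real s" for l
  have wn: "w n = of_real s" unfolding w_def ann using s0 by simp
  have H1: "A m n = cnj (w m) * w n \<and> A n m = cnj (w n) * w m" if "m < Suc n" for m
  proof -
    have h: "A m n = cnj (A n m)" using psd_herm[OF psd, of n m] that by simp
    show ?thesis unfolding wn using s0 by (simp add: w_def h)
  qed
  define A' where "A' k l = A k l - cnj (w k) * w l" for k l
  have H2: "blk_positive n A'"
    unfolding blk_positive_qf
  proof
    fix v
    define t where "t = - (\<Sum>l<n. w l * v l) / w n"
    let ?v = "v(n := t)"
    have Aeq: "A = (\<lambda>k l. A' k l + cnj (w k) * w l)" unfolding A'_def by simp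
    have sum0: "(\<Sum>l<Suc n. w l * ?v l) = 0"
    proof -
      have "(\<Sum>l<Suc n. w l * ?v l) = (\<Sum>l<n. w l * v l) + w n * t" by simp
      also have "\<dots> = 0" unfolding t_def using wn s0 by simp
      finally show ?thesis .
    qed
    have "qf (Suc n) A ?v = qf (Suc n) A' ?v"
      by (subst Aeq, subst qf_rank1) (simp only: sum0, simp)
    also have "\<dots> = qf n A' ?v"
      by (rule qf_Suc_zero) (use H1 in \<open>simp add: A'_def\<close>)
    also have "\<dots> = qf n A' v" by (intro qf_cong, simp)
    finally show "Im (qf n A' v) = 0 \<and> 0 \<le> Re (qf n A' v)"
      using psd unfolding blk_positive_qf by metis
  qed
  show ?thesis using that[of w] H1 H2 unfolding A'_def by blast
qed

lemma chol:
  "blk_positive n A \<Longrightarrow> \<exists>u. \<forall>m<n. \<forall>p<n. A m p = (\<Sum>r<n. cnj (u r m) * u r p)"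
proof (induction n arbitrary: A)
  case 0
  then show ?case by simp
next
  case (Suc n)
  obtain w where H1: "\<And>m. m < Suc n \<Longrightarrow> A m n = cnj (w m) * w n \<and> A n m = cnj (w n) * w m"
    and H2: "blk_positive n (\<lambda>k l. A k l - cnj (w k) * w l)"
    using chol_step[OF Suc.prems] by blast
  obtain u where u: "\<forall>m<n. \<forall>p<n. A m p - cnj (w m) * w p = (\<Sum>r<n. cnj (u r m) * u r p)"
    using Suc.IH[OF H2] by blast
  define u' where "u' r l = (if r < n then (if l < n then u r l else 0) else w l)" for r l
  show ?case
  proof (intro exI allI impI)
    fix m p assume m: "m < Suc n" and p: "p < Suc n"
    have e: "(\<Sum>r<Suc n. cnj (u' r m) * u' r p) = (\<Sum>r<n. cnj (u' r m) * u' r p) + cnj (w m) * w p"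
      by (simp add: u'_def)
    show "A m p = (\<Sum>r<Suc n. cnj (u' r m) * u' r p)"
    proof (cases "m < n \<and> p < n")
      case True
      then have "(\<Sum>r<n. cnj (u' r m) * u' r p) = (\<Sum>r<n. cnj (u r m) * u r p)"
        by (simp add: u'_def)
      then show ?thesis using e u True by (simp add: algebra_simps)
    next
      case False
      then have "m = n \<or> p = n" using m p by auto
      then have "A m p = cnj (w m) * w p" using H1 m p by auto
      moreover have "(\<Sum>r<n. cnj (u' r m) * u' r p) = 0"
      proof (rule sum.neutral, rule ballI)
        fix r assume "r \<in> {..<n}"
        then have "u' r m = 0 \<or> u' r p = 0" using False unfolding u'_def by auto
        then show "cnj (u' r m) * u' r p = 0" by auto
      qed
      ultimately show ?thesis using e by simp
    qed
  qed
qed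


lemma sum_reindex_supp:
  assumes "finite A" "finite N" "inj_on g N"
    and "\<And>x. x \<in> A \<Longrightarrow> x \<notin> g ` N \<Longrightarrow> h x = 0"
    and "\<And>n. n \<in> N \<Longrightarrow> g n \<notin> A \<Longrightarrow> h (g n) = 0"
  shows "sum h A = (\<Sum>n\<in>N. h (g n))"
proof -
  have "sum h A = sum h (A \<union> g ` N)"
    by (rule sum.mono_neutral_left) (use assms in auto)
  also have "\<dots> = sum h (g ` N)"
    by (rule sum.mono_neutral_right) (use assms in auto)
  also have "\<dots> = (\<Sum>n\<in>N. h (g n))" using sum.reindex[OF assms(3)] by simp
  finally show ?thesis .
qed

lemma P_eval: "mmul d (munit (i,k,m)) (munit (j,m',l)) (i0,k0,l0) =
   (if i0 = i \<and> k0 = k \<and> m < d i \<and> j = i \<and> m' = m \<and> l0 = l then 1 else 0)"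
proof -
  have "mmul d (munit (i,k,m)) (munit (j,m',l)) (i0,k0,l0) =
    (\<Sum>n<d i0. (if n = m then (if i0 = i \<and> k0 = k \<and> j = i0 \<and> m' = m \<and> l0 = l then 1 else 0) else 0))"
    unfolding mmul_def munit_def by (simp only: prod.case, intro sum.cong refl) auto
  also have "\<dots> = (if i0 = i \<and> k0 = k \<and> m < d i \<and> j = i \<and> m' = m \<and> l0 = l then 1 else 0)"
    by (auto simp: sum.delta)
  finally show ?thesis .
qed

definition ip0F where
  "ip0F d \<sigma> B x y = (\<Sum>i\<in>B. of_nat (d i) * (\<Sum>k<d i. \<Sum>n<d i. (\<Sum>m<d i. cnj (y (i,m,k)) * x (i,m,n)) * \<sigma> (i,n,k)))"

lemma ip0_formula:
  assumes "finite B" "fst ` supp x \<subseteq> B"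
  shows "ip0 d \<sigma> x y = ip0F d \<sigma> B x y"
proof -
  define Z where "Z = mmul d (mmul d (madj y) x) \<sigma>"
  have Z: "Z (i,k,l) = (\<Sum>n<d i. (\<Sum>m<d i. cnj (y (i,m,k)) * x (i,m,n)) * \<sigma> (i,n,l))" for i k l
    unfolding Z_def by (simp add: mmul_def madj_def)
  have sub: "fst ` supp Z \<subseteq> B"
  proof
    fix i assume "i \<in> fst ` supp Z"
    then obtain k l where "Z (i,k,l) \<noteq> 0" unfolding supp_def by auto
    then obtain n where "(\<Sum>m<d i. cnj (y (i,m,k)) * x (i,m,n)) * \<sigma> (i,n,l) \<noteq> 0"
      unfolding Z by (meson sum.neutral)
    then obtain m where "x (i,m,n) \<noteq> 0" by (metis (no_types, lifting) mult_eq_0_iff mult_zero_left sum.neutral)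
    then have "(i,m,n) \<in> supp x" unfolding supp_def by simp
    then show "i \<in> B" using assms(2) by force
  qed
  have "trM d Z = (\<Sum>i\<in>B. of_nat (d i) * (\<Sum>k<d i. Z (i,k,k)))"
    unfolding trM_def
  proof (rule sum.mono_neutral_left)
    show "finite B" by fact
    show "fst ` supp Z \<subseteq> B" by fact
    show "\<forall>i\<in>B - fst ` supp Z. of_nat (d i) * (\<Sum>k<d i. Z (i, k, k)) = 0"
    proof
      fix i assume "i \<in> B - fst ` supp Z"
      then have "Z (i,k,k) = 0" for k unfolding supp_def by force
      then show "of_nat (d i) * (\<Sum>k<d i. Z (i, k, k)) = 0" by simp
    qed
  qed
  then show ?thesis unfolding ip0_def omega_def ip0F_def Z_def[symmetric] Z .
qed

lemma ip0F_zero: "ip0F d \<sigma> B (\<lambda>_. 0) y = 0"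
  unfolding ip0F_def by simp

lemma ip0F_add: "ip0F d \<sigma> B (\<lambda>c. f c + g c) y = ip0F d \<sigma> B f y + ip0F d \<sigma> B g y"
  unfolding ip0F_def by (simp add: algebra_simps sum.distrib)

lemma ip0F_scale: "ip0F d \<sigma> B (\<lambda>c. a * f c) y = a * ip0F d \<sigma> B f y"
  unfolding ip0F_def by (simp add: algebra_simps sum_distrib_left)

lemma ip0F_sum:
  assumes "finite S"
  shows "ip0F d \<sigma> B (\<lambda>c. \<Sum>p\<in>S. X p * f p c) y = (\<Sum>p\<in>S. X p * ip0F d \<sigma> B (f p) y)"
  using assms
proof (induction S rule: finite_induct)
  case empty
  then show ?case using ip0F_zero by simp
next
  case (insert q S)
  then show ?case by (simp add: ip0F_add ip0F_scale)
qed


definition G where "G d \<sigma> a a' = ip0 d \<sigma> (munit a) (munit a')"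

lemma supp_munit: "supp (munit a) = {a}"
  unfolding supp_def munit_def by auto

lemma G_val:
  assumes "l < d i" "k < d i" "l' < d i'"
  shows "G d \<sigma> (i,k,l) (i',k',l') = (if i' = i \<and> k' = k then of_nat (d i) * \<sigma> (i,l,l') else 0)"
proof -
  have "G d \<sigma> (i,k,l) (i',k',l') = ip0F d \<sigma> {i} (munit (i,k,l)) (munit (i',k',l'))"
    unfolding G_def by (rule ip0_formula) (auto simp: supp_munit)
  also have "\<dots> = (if i' = i \<and> k' = k then of_nat (d i) * \<sigma> (i,l,l') else 0)"
  proof -
    have e1: "(\<Sum>m<d i. cnj (munit (i',k',l') (i,m,ka)) * munit (i,k,l) (i,m,n)) =
       (if n = l \<and> ka = l' \<and> i' = i \<and> k' = k then 1 else 0)" for ka n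
      by (subst sum_one[where k=k]) (use assms in \<open>auto simp: munit_def\<close>)
    have e2: "(\<Sum>n<d i. (if n = l \<and> ka = l' \<and> i' = i \<and> k' = k then 1 else 0) * \<sigma> (i,n,ka)) =
       (if ka = l' \<and> i' = i \<and> k' = k then \<sigma> (i,l,ka) else 0)" for ka
      by (subst sum_one[where k=l]) (use assms in auto)
    have e3: "(\<Sum>ka<d i. (if ka = l' \<and> i' = i \<and> k' = k then \<sigma> (i,l,ka) else 0)) =
       (if i' = i \<and> k' = k then \<sigma> (i,l,l') else 0)"
    proof (cases "i' = i \<and> k' = k")
      case True
      then show ?thesis by (subst sum_one[where k=l']) (use assms in auto)
    qed auto
    show ?thesis unfolding ip0F_def by (simp add: e1 e2 e3)
  qed
  finally show ?thesis .
qed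


definition tauS where
  "tauS d \<sigma> i = (SOME \<tau>. blk_is_inverse (d i) (\<lambda>k l. \<sigma> (i,k,l)) \<tau> \<and> (\<Sum>k<d i. \<tau> k k) = of_nat (d i))"

definition Tm where
  "Tm d \<sigma> y = (\<lambda>((i,k,p),(j,q,l)). if i = j \<and> k < d i \<and> p < d i \<and> q < d i \<and> l < d i
      then cnj (tauS d \<sigma> i p q) * y (i,k,l) / of_nat (d i) else 0)"

lemma Tm_eval: "Tm d \<sigma> y ((i,k,p),(j,q,l)) = (if i = j \<and> k < d i \<and> p < d i \<and> q < d i \<and> l < d i
      then cnj (tauS d \<sigma> i p q) * y (i,k,l) / of_nat (d i) else 0)"
  by (simp add: Tm_def)

lemma tau_prop:
  assumes "delta_form_density d \<sigma>"
  shows "blk_is_inverse (d i) (\<lambda>k l. \<sigma> (i,k,l)) (tauS d \<sigma> i) \<and> (\<Sum>k<d i. tauS d \<sigma> i k k) = of_nat (d i)"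
proof -
  have "\<exists>\<tau>. blk_is_inverse (d i) (\<lambda>k l. \<sigma> (i,k,l)) \<tau> \<and> (\<Sum>k<d i. \<tau> k k) = of_nat (d i)"
    using assms unfolding delta_form_density_def by blast
  then show ?thesis unfolding tauS_def by (rule someI_ex)
qed

lemma mult_apply: "mult d X c = (\<Sum>p\<in>supp X. X p * mmul d (munit (fst p)) (munit (snd p)) c)"
  unfolding mult_def by (simp add: case_prod_beta)

lemma mult_M0:
  assumes "X \<in> F1 d"
  shows "mult d X \<in> M0 d"
proof -
  have fin: "finite (supp X)" and sv: "supp X \<subseteq> valid d \<times> valid d" using assms unfolding F1_def by auto
  define f :: "'a mu \<times> 'a mu \<Rightarrow> 'a mu" where "f = (\<lambda>((i,k,m),(j,m',l)). (i,k,l))"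
  have sub: "supp (mult d X) \<subseteq> valid d \<inter> f ` supp X"
  proof
    fix c assume "c \<in> supp (mult d X)"
    then have "mult d X c \<noteq> 0" unfolding supp_def by simp
    then obtain p where p: "p \<in> supp X" "X p * mmul d (munit (fst p)) (munit (snd p)) c \<noteq> 0"
      unfolding mult_apply by (meson sum.not_neutral_contains_not_neutral)
    obtain i k m j m' l where pe: "p = ((i,k,m),(j,m',l))" by (cases p) auto
    obtain i0 k0 l0 where ce: "c = (i0,k0,l0)" by (cases c) auto
    have "i0 = i \<and> k0 = k \<and> j = i \<and> l0 = l" using p(2) unfolding pe ce by (auto simp: P_eval split: if_splits)
    moreover have "k < d i" "l < d j" using sv p(1) unfolding pe valid_def by auto
    ultimately show "c \<in> valid d \<inter> f ` supp X"
      using p(1) unfolding ce valid_def f_def pe by (auto intro!: image_eqI[where x="((i,k,m),(j,m',l))"])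
  qed
  moreover have "finite (f ` supp X)" using fin by simp
  ultimately show ?thesis unfolding M0_def mem_Collect_eq by (meson finite_subset le_infE)
qed

lemma Tm_F1:
  assumes "y \<in> M0 d"
  shows "Tm d \<sigma> y \<in> F1 d"
proof -
  have fin: "finite (supp y)" using assms unfolding M0_def by auto
  define g where "g c = (\<lambda>(p,q). ((fst c, fst (snd c), p), (fst c, q, snd (snd c)))) ` ({..<d (fst c)} \<times> {..<d (fst c)})" for c :: "'a mu"
  have s1: "supp (Tm d \<sigma> y) \<subseteq> valid d \<times> valid d"
  proof
    fix x assume "x \<in> supp (Tm d \<sigma> y)"
    then show "x \<in> valid d \<times> valid d"
      by (cases x) (auto simp: supp_def Tm_def valid_def split: if_splits)
  qed
  have s2: "supp (Tm d \<sigma> y) \<subseteq> (\<Union>c\<in>supp y. g c)"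
  proof
    fix x assume x: "x \<in> supp (Tm d \<sigma> y)"
    obtain i k p j q l where xe: "x = ((i,k,p),(j,q,l))" by (cases x) auto
    have h: "i = j" "k < d i" "p < d i" "q < d i" "l < d i" "y (i,k,l) \<noteq> 0"
      using x unfolding xe supp_def by (auto simp: Tm_eval split: if_splits)
    show "x \<in> (\<Union>c\<in>supp y. g c)"
      unfolding xe
    proof (rule UN_I[where a="(i,k,l)"])
      show "(i,k,l) \<in> supp y" using h unfolding supp_def by simp
      show "((i,k,p),(j,q,l)) \<in> g (i,k,l)" unfolding g_def using h
        by (intro image_eqI[where x="(p,q)"]) auto
    qed
  qed
  have "finite (\<Union>c\<in>supp y. g c)" using fin unfolding g_def by auto
  then show ?thesis unfolding F1_def using s1 s2 by (auto intro: finite_subset)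
qed


lemma Tm_nz:
  assumes "Tm d \<sigma> y ((i,k,p),(j,q,l)) \<noteq> 0"
  shows "i = j \<and> k < d i \<and> p < d i \<and> q < d i \<and> l < d i"
  using assms by (simp add: Tm_eval split: if_splits)

lemma mult_Tm:
  fixes d :: "'i \<Rightarrow> nat"
  assumes dpos: "\<forall>i. d i > 0" and df: "delta_form_density d \<sigma>" and y: "y \<in> M0 d"
  shows "mult d (Tm d \<sigma> y) = y"
proof (rule ext)
  fix c :: "'i mu"
  obtain i k l where ce: "c = (i,k,l)" by (cases c) auto
  define W where "W = Tm d \<sigma> y"
  have finW: "finite (supp W)" using Tm_F1[OF y] unfolding W_def F1_def by auto
  define h where "h p = W p * mmul d (munit (fst p)) (munit (snd p)) (i,k,l)" for p
  have hnz: "\<exists>m. m < d i \<and> p = ((i,k,m),(i,m,l)) \<and> k < d i \<and> l < d i" if "h p \<noteq> 0" for p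
  proof -
    obtain i1 k1 m j m' l1 where pe: "p = ((i1,k1,m),(j,m',l1))" by (cases p) auto
    have Wp: "W p \<noteq> 0" and P: "mmul d (munit (fst p)) (munit (snd p)) (i,k,l) \<noteq> 0" using that unfolding h_def by auto
    from Wp have "i1 = j \<and> k1 < d i1 \<and> m < d i1 \<and> m' < d i1 \<and> l1 < d i1" unfolding W_def pe by (rule Tm_nz)
    moreover have "i = i1 \<and> k = k1 \<and> m < d i1 \<and> j = i1 \<and> m' = m \<and> l = l1" using P unfolding pe by (simp add: P_eval split: if_splits)
    ultimately show ?thesis unfolding pe by auto
  qed
  have "mult d W (i,k,l) = sum h (supp W)" unfolding mult_apply h_def by simp
  also have "\<dots> = y (i,k,l)"
  proof (cases "k < d i \<and> l < d i")
    case True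
    define g where "g n = ((i,k,n),(i,n,l))" for n :: nat
    have "sum h (supp W) = (\<Sum>n<d i. h (g n))"
    proof (rule sum_reindex_supp)
      show "inj_on g {..<d i}" unfolding g_def by (auto intro: inj_onI)
      show "h x = 0" if "x \<in> supp W" "x \<notin> g ` {..<d i}" for x
        using hnz[of x] that unfolding g_def by auto
      show "h (g n) = 0" if "n \<in> {..<d i}" "g n \<notin> supp W" for n
        using that unfolding h_def supp_def by auto
    qed (use finW in auto)
    also have "\<dots> = (\<Sum>n<d i. cnj (tauS d \<sigma> i n n) * y (i,k,l) / of_nat (d i))"
      using True by (intro sum.cong refl) (simp add: h_def g_def W_def Tm_eval P_eval)
    also have "\<dots> = cnj (\<Sum>n<d i. tauS d \<sigma> i n n) * y (i,k,l) / of_nat (d i)"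
      by (simp add: sum_divide_distrib[symmetric] sum_distrib_right[symmetric])
    also have "\<dots> = y (i,k,l)" using tau_prop[OF df, of i] dpos by simp
    finally show ?thesis .
  next
    case False
    have "sum h (supp W) = 0" using hnz False by (meson sum.neutral)
    moreover have "y (i,k,l) = 0" using y False unfolding M0_def supp_def valid_def by auto
    ultimately show ?thesis by simp
  qed
  finally show "mult d (Tm d \<sigma> y) c = y c" unfolding ce W_def .
qed


lemma ip0_munit:
  assumes "k < d i" "l < d i"
  shows "ip0 d \<sigma> (munit (i,k,l)) y = of_nat (d i) * (\<Sum>k0<d i. cnj (y (i,k,k0)) * \<sigma> (i,l,k0))"
proof -
  have "ip0 d \<sigma> (munit (i,k,l)) y = ip0F d \<sigma> {i} (munit (i,k,l)) y"
    by (rule ip0_formula) (auto simp: supp_munit)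
  also have "\<dots> = of_nat (d i) * (\<Sum>k0<d i. cnj (y (i,k,k0)) * \<sigma> (i,l,k0))"
  proof -
    have e1: "(\<Sum>m0<d i. cnj (y (i,m0,k0)) * munit (i,k,l) (i,m0,n)) = (if n = l then cnj (y (i,k,k0)) else 0)" for k0 n
      by (subst sum_one[where k=k]) (use assms in \<open>auto simp: munit_def\<close>)
    have e2: "(\<Sum>n<d i. (if n = l then cnj (y (i,k,k0)) else 0) * \<sigma> (i,n,k0)) = cnj (y (i,k,k0)) * \<sigma> (i,l,k0)" for k0
      by (subst sum_one[where k=l]) (use assms in auto)
    show ?thesis unfolding ip0F_def by (simp add: e1 e2)
  qed
  finally show ?thesis .
qed

lemma supp_zero: "supp (\<lambda>_. 0) = {}" unfolding supp_def by simp

lemma key: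
  fixes d :: "'i \<Rightarrow> nat"
  assumes dpos: "\<forall>i. d i > 0" and df: "delta_form_density d \<sigma>" and y: "y \<in> M0 d"
    and v: "k < d i" "m < d i" "m' < d j" "l < d j"
  shows "ip0 d \<sigma> (mmul d (munit (i,k,m)) (munit (j,m',l))) y =
     (\<Sum>q\<in>supp (Tm d \<sigma> y). cnj (Tm d \<sigma> y q) * G d \<sigma> (i,k,m) (fst q) * G d \<sigma> (j,m',l) (snd q))"
proof -
  define W where "W = Tm d \<sigma> y"
  have finW: "finite (supp W)" using Tm_F1[OF y] unfolding W_def F1_def by auto
  define h where "h q = cnj (W q) * G d \<sigma> (i,k,m) (fst q) * G d \<sigma> (j,m',l) (snd q)" for q
  have hnz: "\<exists>r l'. r < d i \<and> l' < d i \<and> i = j \<and> q = ((i,k,r),(i,m',l'))" if "h q \<noteq> 0" for q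
  proof -
    obtain i1 k1 r j1 q1 l1 where qe: "q = ((i1,k1,r),(j1,q1,l1))" by (cases q) auto
    have Wq: "W q \<noteq> 0" and G1: "G d \<sigma> (i,k,m) (fst q) \<noteq> 0" and G2: "G d \<sigma> (j,m',l) (snd q) \<noteq> 0"
      using that unfolding h_def by auto
    from Wq have t: "i1 = j1 \<and> k1 < d i1 \<and> r < d i1 \<and> q1 < d i1 \<and> l1 < d i1" unfolding W_def qe by (rule Tm_nz)
    have ga: "G d \<sigma> (i,k,m) (i1,k1,r) = (if i1 = i \<and> k1 = k then of_nat (d i) * \<sigma> (i,m,r) else 0)"
      by (rule G_val) (use v t in auto)
    have gb: "G d \<sigma> (j,m',l) (j1,q1,l1) = (if j1 = j \<and> q1 = m' then of_nat (d j) * \<sigma> (j,l,l1) else 0)"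
      by (rule G_val) (use v t in auto)
    have "i1 = i \<and> k1 = k" using G1 unfolding qe by (simp add: ga split: if_splits)
    moreover have "j1 = j \<and> q1 = m'" using G2 unfolding qe by (simp add: gb split: if_splits)
    ultimately show ?thesis using t unfolding qe by auto
  qed
  show ?thesis
  proof (cases "i = j")
    case False
    have "mmul d (munit (i,k,m)) (munit (j,m',l)) = (\<lambda>_. 0)"
      using False by (auto simp: P_eval)
    then have "ip0 d \<sigma> (mmul d (munit (i,k,m)) (munit (j,m',l))) y = 0"
      using ip0_formula[of "{}" "\<lambda>_. 0" d \<sigma> y] by (simp add: supp_zero ip0F_def)
    moreover have "sum h (supp W) = 0" using hnz False by (meson sum.neutral)
    ultimately show ?thesis unfolding h_def W_def by simp
  next
    case True
    then have ji: "j = i" by simp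
    let ?\<tau> = "tauS d \<sigma> i"
    have inv: "blk_is_inverse (d i) (\<lambda>k l. \<sigma> (i,k,l)) ?\<tau>" using tau_prop[OF df] by blast
    have stau: "(\<Sum>r<d i. \<sigma> (i,m,r) * ?\<tau> r m') = (if m = m' then 1 else 0)"
      using inv v ji unfolding blk_is_inverse_def blk_mul_def by auto
    define g where "g x = ((i,k,fst x),(i,m',snd x))" for x :: "nat \<times> nat"
    have "sum h (supp W) = (\<Sum>x\<in>{..<d i} \<times> {..<d i}. h (g x))"
    proof (rule sum_reindex_supp)
      show "inj_on g ({..<d i} \<times> {..<d i})" unfolding g_def by (auto intro: inj_onI)
      show "h x = 0" if "x \<in> supp W" "x \<notin> g ` ({..<d i} \<times> {..<d i})" for x
      proof (rule ccontr)
        assume "h x \<noteq> 0"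
        then obtain r l' where "r < d i" "l' < d i" "x = ((i,k,r),(i,m',l'))" using hnz by blast
        then have "x = g (r,l')" unfolding g_def by simp
        then show False using that \<open>r < d i\<close> \<open>l' < d i\<close> by auto
      qed
      show "h (g n) = 0" if "n \<in> {..<d i} \<times> {..<d i}" "g n \<notin> supp W" for n
        using that unfolding h_def supp_def by auto
    qed (use finW in auto)
    also have "\<dots> = (\<Sum>r<d i. \<Sum>l'<d i. h (g (r,l')))"
      by (simp add: sum.cartesian_product)
    also have "\<dots> = (\<Sum>r<d i. \<Sum>l'<d i. (\<sigma> (i,m,r) * ?\<tau> r m') * (of_nat (d i) * (cnj (y (i,k,l')) * \<sigma> (i,l,l'))))"
    proof (intro sum.cong refl)
      fix r l' assume r: "r \<in> {..<d i}" and l': "l' \<in> {..<d i}"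
      have dnz: "(of_nat (d i) :: complex) \<noteq> 0" using dpos by simp
      have "h (g (r,l')) = cnj (cnj (?\<tau> r m') * y (i,k,l') / of_nat (d i)) * (of_nat (d i) * \<sigma> (i,m,r)) * (of_nat (d i) * \<sigma> (i,l,l'))"
        unfolding h_def g_def W_def using r l' v ji by (simp add: Tm_eval G_val)
      also have "\<dots> = (\<sigma> (i,m,r) * ?\<tau> r m') * (of_nat (d i) * (cnj (y (i,k,l')) * \<sigma> (i,l,l')))"
        using dnz by (simp add: field_simps)
      finally show "h (g (r,l')) = (\<sigma> (i,m,r) * ?\<tau> r m') * (of_nat (d i) * (cnj (y (i,k,l')) * \<sigma> (i,l,l')))" .
    qed
    also have "\<dots> = (\<Sum>r<d i. \<sigma> (i,m,r) * ?\<tau> r m') * (\<Sum>l'<d i. of_nat (d i) * (cnj (y (i,k,l')) * \<sigma> (i,l,l')))"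
      by (simp add: sum_product)
    also have "\<dots> = (if m = m' then of_nat (d i) * (\<Sum>k0<d i. cnj (y (i,k,k0)) * \<sigma> (i,l,k0)) else 0)"
      unfolding stau by (simp add: sum_distrib_left)
    also have "\<dots> = ip0 d \<sigma> (mmul d (munit (i,k,m)) (munit (j,m',l))) y"
    proof (cases "m = m'")
      case True
      have "mmul d (munit (i,k,m)) (munit (j,m',l)) = munit (i,k,l)"
      proof (rule ext)
        fix c :: "'i mu"
        obtain i0 k0 l0 where ce: "c = (i0,k0,l0)" by (cases c) auto
        show "mmul d (munit (i,k,m)) (munit (j,m',l)) c = munit (i,k,l) c"
          unfolding ce P_eval using True ji v by (auto simp: munit_def)
      qed
      then show ?thesis using True ip0_munit[of k d i l \<sigma> y] v ji by simp
    next
      case False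
      have "mmul d (munit (i,k,m)) (munit (j,m',l)) = (\<lambda>_. 0)"
        using False by (auto simp: P_eval)
      then have "ip0 d \<sigma> (mmul d (munit (i,k,m)) (munit (j,m',l))) y = 0"
        using ip0_formula[of "{}" "\<lambda>_. 0" d \<sigma> y] by (simp add: supp_zero ip0F_def)
      then show ?thesis using False by simp
    qed
    finally show ?thesis unfolding h_def W_def by simp
  qed
qed



lemma supp_mult_blocks:
  assumes "c \<in> supp (mult d X)"
  shows "\<exists>p\<in>supp X. fst c = fst (fst p)"
proof -
  have "mult d X c \<noteq> 0" using assms unfolding supp_def by simp
  then obtain p where p: "p \<in> supp X" "X p * mmul d (munit (fst p)) (munit (snd p)) c \<noteq> 0"
    unfolding mult_apply by (meson sum.not_neutral_contains_not_neutral)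
  obtain i k m j m' l where pe: "p = ((i,k,m),(j,m',l))" by (cases p) auto
  obtain i0 k0 l0 where ce: "c = (i0,k0,l0)" by (cases c) auto
  have "i0 = i" using p(2) unfolding pe ce by (auto simp: P_eval split: if_splits)
  then show ?thesis using p(1) unfolding pe ce by force
qed

lemma ip1_apply:
  "ip1 d \<sigma> X Y = (\<Sum>p\<in>supp X. \<Sum>q\<in>supp Y. X p * cnj (Y q) * G d \<sigma> (fst p) (fst q) * G d \<sigma> (snd p) (snd q))"
  unfolding ip1_def G_def by (simp add: case_prod_beta)

lemma ident:
  fixes d :: "'i \<Rightarrow> nat"
  assumes dpos: "\<forall>i. d i > 0" and df: "delta_form_density d \<sigma>" and X: "X \<in> F1 d" and y: "y \<in> M0 d"
  shows "ip0 d \<sigma> (mult d X) y = ip1 d \<sigma> X (Tm d \<sigma> y)"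
proof -
  define S where "S = supp X"
  have finS: "finite S" and sv: "S \<subseteq> valid d \<times> valid d" using X unfolding F1_def S_def by auto
  define B where "B = fst ` fst ` S"
  have finB: "finite B" unfolding B_def using finS by simp
  have sub: "fst ` supp (mult d X) \<subseteq> B"
    using supp_mult_blocks unfolding B_def S_def by fastforce
  have "ip0 d \<sigma> (mult d X) y = ip0F d \<sigma> B (mult d X) y" by (rule ip0_formula[OF finB sub])
  also have "\<dots> = ip0F d \<sigma> B (\<lambda>c. \<Sum>p\<in>S. X p * mmul d (munit (fst p)) (munit (snd p)) c) y"
    unfolding S_def mult_apply by simp
  also have "\<dots> = (\<Sum>p\<in>S. X p * ip0F d \<sigma> B (mmul d (munit (fst p)) (munit (snd p))) y)"
    by (rule ip0F_sum[OF finS])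
  also have "\<dots> = (\<Sum>p\<in>S. X p * (\<Sum>q\<in>supp (Tm d \<sigma> y). cnj (Tm d \<sigma> y q) * G d \<sigma> (fst p) (fst q) * G d \<sigma> (snd p) (snd q)))"
  proof (intro sum.cong refl arg_cong2[where f="(*)"])
    fix p assume pS: "p \<in> S"
    obtain i k m j m' l where pe: "p = ((i,k,m),(j,m',l))" by (cases p) auto
    have v: "k < d i" "m < d i" "m' < d j" "l < d j" using sv pS unfolding pe valid_def by auto
    have "fst ` supp (mmul d (munit (fst p)) (munit (snd p))) \<subseteq> B"
    proof
      fix i0 assume "i0 \<in> fst ` supp (mmul d (munit (fst p)) (munit (snd p)))"
      then obtain k0 l0 where "mmul d (munit (fst p)) (munit (snd p)) (i0,k0,l0) \<noteq> 0"
        unfolding supp_def by auto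
      then have "i0 = i" unfolding pe by (auto simp: P_eval split: if_splits)
      then show "i0 \<in> B" unfolding B_def using pS pe by force
    qed
    then have "ip0F d \<sigma> B (mmul d (munit (fst p)) (munit (snd p))) y = ip0 d \<sigma> (mmul d (munit (fst p)) (munit (snd p))) y"
      using ip0_formula[OF finB] by metis
    also have "\<dots> = (\<Sum>q\<in>supp (Tm d \<sigma> y). cnj (Tm d \<sigma> y q) * G d \<sigma> (fst p) (fst q) * G d \<sigma> (snd p) (snd q))"
      unfolding pe using key[OF dpos df y v] by simp
    finally show "ip0F d \<sigma> B (mmul d (munit (fst p)) (munit (snd p))) y = (\<Sum>q\<in>supp (Tm d \<sigma> y). cnj (Tm d \<sigma> y q) * G d \<sigma> (fst p) (fst q) * G d \<sigma> (snd p) (snd q))" .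
  qed
  also have "\<dots> = ip1 d \<sigma> X (Tm d \<sigma> y)"
    unfolding ip1_apply S_def by (simp add: sum_distrib_left mult.assoc)
  finally show ?thesis .
qed



lemma gram_psd:
  fixes G :: "'a \<Rightarrow> 'a \<Rightarrow> complex" and V :: "'r \<Rightarrow> 'a \<Rightarrow> complex"
  assumes finS: "finite S" and finR: "finite R"
    and dec: "\<And>a a'. a \<in> A \<Longrightarrow> a' \<in> A \<Longrightarrow> G a a' = (\<Sum>\<rho>\<in>R. cnj (V \<rho> a) * V \<rho> a')"
    and s1: "fst ` S \<subseteq> A" and s2: "snd ` S \<subseteq> A"
  shows "Re (\<Sum>p\<in>S. \<Sum>q\<in>S. Z p * cnj (Z q) * G (fst p) (fst q) * G (snd p) (snd q)) \<ge> 0"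
proof -
  define F where "F p q \<rho> \<rho>' = (Z p * cnj (V \<rho> (fst p)) * cnj (V \<rho>' (snd p))) * (cnj (Z q) * V \<rho> (fst q) * V \<rho>' (snd q))" for p q \<rho> \<rho>'
  define W where "W \<rho> \<rho>' = (\<Sum>p\<in>S. Z p * cnj (V \<rho> (fst p)) * cnj (V \<rho>' (snd p)))" for \<rho> \<rho>'
  have "(\<Sum>p\<in>S. \<Sum>q\<in>S. Z p * cnj (Z q) * G (fst p) (fst q) * G (snd p) (snd q))
      = (\<Sum>p\<in>S. \<Sum>q\<in>S. \<Sum>\<rho>\<in>R. \<Sum>\<rho>'\<in>R. F p q \<rho> \<rho>')"
  proof (intro sum.cong refl)
    fix p q assume p: "p \<in> S" and q: "q \<in> S"
    have "Z p * cnj (Z q) * G (fst p) (fst q) * G (snd p) (snd q)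
        = Z p * cnj (Z q) * ((\<Sum>\<rho>\<in>R. cnj (V \<rho> (fst p)) * V \<rho> (fst q)) * (\<Sum>\<rho>'\<in>R. cnj (V \<rho>' (snd p)) * V \<rho>' (snd q)))"
      using dec[of "fst p" "fst q"] dec[of "snd p" "snd q"] p q s1 s2 by (simp add: image_subset_iff mult.assoc)
    also have "\<dots> = Z p * cnj (Z q) * (\<Sum>\<rho>\<in>R. \<Sum>\<rho>'\<in>R. (cnj (V \<rho> (fst p)) * V \<rho> (fst q)) * (cnj (V \<rho>' (snd p)) * V \<rho>' (snd q)))"
      by (simp only: sum_product)
    also have "\<dots> = (\<Sum>\<rho>\<in>R. \<Sum>\<rho>'\<in>R. Z p * cnj (Z q) * ((cnj (V \<rho> (fst p)) * V \<rho> (fst q)) * (cnj (V \<rho>' (snd p)) * V \<rho>' (snd q))))"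
      by (simp only: sum_distrib_left)
    also have "\<dots> = (\<Sum>\<rho>\<in>R. \<Sum>\<rho>'\<in>R. F p q \<rho> \<rho>')"
      unfolding F_def by (intro sum.cong refl) (simp add: algebra_simps)
    finally show "Z p * cnj (Z q) * G (fst p) (fst q) * G (snd p) (snd q) = (\<Sum>\<rho>\<in>R. \<Sum>\<rho>'\<in>R. F p q \<rho> \<rho>')" .
  qed
  also have "\<dots> = (\<Sum>p\<in>S. \<Sum>\<rho>\<in>R. \<Sum>q\<in>S. \<Sum>\<rho>'\<in>R. F p q \<rho> \<rho>')"
    by (intro sum.cong refl) (rule sum.swap)
  also have "\<dots> = (\<Sum>p\<in>S. \<Sum>\<rho>\<in>R. \<Sum>\<rho>'\<in>R. \<Sum>q\<in>S. F p q \<rho> \<rho>')"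
    by (intro sum.cong refl) (rule sum.swap)
  also have "\<dots> = (\<Sum>\<rho>\<in>R. \<Sum>p\<in>S. \<Sum>\<rho>'\<in>R. \<Sum>q\<in>S. F p q \<rho> \<rho>')"
    by (rule sum.swap)
  also have "\<dots> = (\<Sum>\<rho>\<in>R. \<Sum>\<rho>'\<in>R. \<Sum>p\<in>S. \<Sum>q\<in>S. F p q \<rho> \<rho>')"
    by (intro sum.cong refl) (rule sum.swap)
  also have "\<dots> = (\<Sum>\<rho>\<in>R. \<Sum>\<rho>'\<in>R. W \<rho> \<rho>' * cnj (W \<rho> \<rho>'))"
    unfolding W_def F_def cnj_sum sum_product by (simp add: mult.assoc)
  finally have eq: "(\<Sum>p\<in>S. \<Sum>q\<in>S. Z p * cnj (Z q) * G (fst p) (fst q) * G (snd p) (snd q)) = (\<Sum>\<rho>\<in>R. \<Sum>\<rho>'\<in>R. W \<rho> \<rho>' * cnj (W \<rho> \<rho>'))" .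
  have "Re (W \<rho> \<rho>' * cnj (W \<rho> \<rho>')) \<ge> 0" for \<rho> \<rho>'
    by (simp add: complex_mult_cnj)
  then show ?thesis unfolding eq Re_sum by (intro sum_nonneg) auto
qed



definition Vd :: "('i \<Rightarrow> nat) \<Rightarrow> ('i \<Rightarrow> nat \<Rightarrow> nat \<Rightarrow> complex) \<Rightarrow> 'i mu \<Rightarrow> 'i mu \<Rightarrow> complex" where
  "Vd d U \<rho> a = (if fst a = fst \<rho> \<and> fst (snd a) = fst (snd \<rho>)
      then of_real (sqrt (real (d (fst a)))) * U (fst a) (snd (snd \<rho>)) (snd (snd a)) else 0)"

lemma G_dec:
  fixes d :: "'i \<Rightarrow> nat"
  assumes decs: "\<forall>i. \<forall>m<d i. \<forall>p<d i. \<sigma> (i,m,p) = (\<Sum>r<d i. cnj (U i r m) * U i r p)"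
    and a: "a \<in> valid d" "fst a \<in> Bk" and a': "a' \<in> valid d" and that: "finite Bk"
  shows "G d \<sigma> a a' = (\<Sum>\<rho>\<in>{\<rho>. \<rho> \<in> valid d \<and> fst \<rho> \<in> Bk}. cnj (Vd d U \<rho> a) * Vd d U \<rho> a')"
proof -
  obtain i k l where ae: "a = (i,k,l)" by (cases a) auto
  obtain i' k' l' where ae': "a' = (i',k',l')" by (cases a') auto
  have v: "k < d i" "l < d i" "k' < d i'" "l' < d i'" "i \<in> Bk" using a a' unfolding ae ae' valid_def by auto
  define R where "R = {\<rho>. \<rho> \<in> valid d \<and> fst \<rho> \<in> Bk}"
  have finR: "finite R"
  proof -
    have "R \<subseteq> (\<Union>j\<in>Bk. (\<lambda>(s,r). (j,s,r)) ` ({..<d j} \<times> {..<d j}))"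
      unfolding R_def valid_def by force
    moreover have "finite (\<Union>j\<in>Bk. (\<lambda>(s,r). (j,s,r)) ` ({..<d j} \<times> {..<d j}))" using that by simp
    ultimately show ?thesis by (rule finite_subset)
  qed
  define h where "h \<rho> = cnj (Vd d U \<rho> a) * Vd d U \<rho> a'" for \<rho>
  define g where "g r = (i,k,r)" for r :: nat
  have "sum h R = (\<Sum>r<d i. h (g r))"
  proof (rule sum_reindex_supp)
    show "inj_on g {..<d i}" unfolding g_def by (auto intro: inj_onI)
    show "h x = 0" if "x \<in> R" "x \<notin> g ` {..<d i}" for x
    proof (rule ccontr)
      assume "h x \<noteq> 0"
      then have "Vd d U x a \<noteq> 0" unfolding h_def by auto
      then have "fst x = i \<and> fst (snd x) = k" unfolding Vd_def ae by (auto split: if_splits)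
      moreover have "snd (snd x) < d (fst x)" using that(1) unfolding R_def valid_def by auto
      ultimately have "x = g (snd (snd x))" "snd (snd x) \<in> {..<d i}" unfolding g_def by (cases x; auto)+
      then show False using that(2) by blast
    qed
    show "h (g n) = 0" if "n \<in> {..<d i}" "g n \<notin> R" for n
      using that v unfolding g_def R_def valid_def by auto
  qed (use finR in auto)
  also have "\<dots> = (if i' = i \<and> k' = k then of_nat (d i) * (\<Sum>r<d i. cnj (U i r l) * U i r l') else 0)"
  proof -
    have sq: "cnj (complex_of_real (sqrt (real (d i)))) * complex_of_real (sqrt (real (d i))) = of_nat (d i)"
      by (simp flip: of_real_mult)
    have "h (g r) = (if i' = i \<and> k' = k then of_nat (d i) * (cnj (U i r l) * U i r l') else 0)" for r
      unfolding h_def g_def Vd_def ae ae' using sq by (auto simp: algebra_simps)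
    then show ?thesis by (cases "i' = i \<and> k' = k") (auto simp: sum_distrib_left)
  qed
  also have "\<dots> = G d \<sigma> a a'"
    unfolding ae ae' using G_val[of l d i k l' i' \<sigma> k'] v decs by auto
  finally show ?thesis unfolding h_def R_def by simp
qed

lemma ip1_ext:
  fixes d :: "'i \<Rightarrow> nat" and X Y :: "'i mu \<times> 'i mu \<Rightarrow> complex"
  assumes "finite S" "supp X \<subseteq> S" "supp Y \<subseteq> S"
  shows "ip1 d \<sigma> X Y = (\<Sum>p\<in>S. \<Sum>q\<in>S. X p * cnj (Y q) * G d \<sigma> (fst p) (fst q) * G d \<sigma> (snd p) (snd q))"
proof -
  have "ip1 d \<sigma> X Y = (\<Sum>p\<in>supp X. \<Sum>q\<in>S. X p * cnj (Y q) * G d \<sigma> (fst p) (fst q) * G d \<sigma> (snd p) (snd q))"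
    unfolding ip1_apply
  proof (rule sum.cong[OF refl])
    fix p :: "'i mu \<times> 'i mu"
    show "(\<Sum>q\<in>supp Y. X p * cnj (Y q) * G d \<sigma> (fst p) (fst q) * G d \<sigma> (snd p) (snd q)) =
          (\<Sum>q\<in>S. X p * cnj (Y q) * G d \<sigma> (fst p) (fst q) * G d \<sigma> (snd p) (snd q))"
      by (rule sum.mono_neutral_left) (use assms in \<open>auto simp: supp_def\<close>)
  qed
  also have "\<dots> = (\<Sum>p\<in>S. \<Sum>q\<in>S. X p * cnj (Y q) * G d \<sigma> (fst p) (fst q) * G d \<sigma> (snd p) (snd q))"
    by (rule sum.mono_neutral_left) (use assms in \<open>auto simp: supp_def\<close>)
  finally show ?thesis .
qed



theorem proposition2p4:
  fixes d :: "'i \<Rightarrow> nat" and \<sigma> :: "'i \<times> nat \<times> nat \<Rightarrow> complex"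
  assumes "\<forall>i. d i > 0"
    and "delta_form_density d \<sigma>"
  shows "(\<forall>X\<in>F1 d. mult d X \<in> M0 d)
     \<and> (\<exists>C. \<forall>X\<in>F1 d. norm0 d \<sigma> (mult d X) \<le> C * norm1 d \<sigma> X)
     \<and> (\<exists>T. (\<forall>y\<in>M0 d. T y \<in> F1 d)
            \<and> (\<forall>X\<in>F1 d. \<forall>y\<in>M0 d. ip0 d \<sigma> (mult d X) y = ip1 d \<sigma> X (T y))
            \<and> (\<forall>y\<in>M0 d. mult d (T y) = y))"
proof -
  note dpos = assms(1) and df = assms(2)
  have P1: "\<forall>X\<in>F1 d. mult d X \<in> M0 d" using mult_M0 by blast
  have P3: "\<exists>T. (\<forall>y\<in>M0 d. T y \<in> F1 d)
            \<and> (\<forall>X\<in>F1 d. \<forall>y\<in>M0 d. ip0 d \<sigma> (mult d X) y = ip1 d \<sigma> X (T y))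
            \<and> (\<forall>y\<in>M0 d. mult d (T y) = y)"
    by (rule exI[of _ "Tm d \<sigma>"]) (use Tm_F1 ident[OF dpos df] mult_Tm[OF dpos df] in auto)
  obtain U where decs: "\<forall>i. \<forall>m<d i. \<forall>p<d i. \<sigma> (i,m,p) = (\<Sum>r<d i. cnj (U i r m) * U i r p)"
  proof -
    have "\<forall>i. \<exists>u. \<forall>m<d i. \<forall>p<d i. \<sigma> (i,m,p) = (\<Sum>r<d i. cnj (u r m) * u r p)"
      using chol df unfolding delta_form_density_def by blast
    then have "\<exists>U. \<forall>i. \<forall>m<d i. \<forall>p<d i. \<sigma> (i,m,p) = (\<Sum>r<d i. cnj (U i r m) * U i r p)"
      by (rule choice)
    then show ?thesis using that by blast
  qed
  have P2: "\<forall>X\<in>F1 d. norm0 d \<sigma> (mult d X) \<le> 1 * norm1 d \<sigma> X"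
  proof
    fix X assume X: "X \<in> F1 d"
    define y where "y = mult d X"
    have y: "y \<in> M0 d" unfolding y_def using mult_M0[OF X] .
    define W where "W = Tm d \<sigma> y"
    have W: "W \<in> F1 d" unfolding W_def using Tm_F1[OF y] .
    define S where "S = supp X \<union> supp W"
    have finS: "finite S" and Sv: "S \<subseteq> valid d \<times> valid d" using X W unfolding S_def F1_def by auto
    define Bk where "Bk = fst ` fst ` S \<union> fst ` snd ` S"
    have finBk: "finite Bk" unfolding Bk_def using finS by simp
    define A where "A = {a. a \<in> valid d \<and> fst a \<in> Bk}"
    define R where "R = {\<rho>. \<rho> \<in> valid d \<and> fst \<rho> \<in> Bk}"
    have finR: "finite R"
    proof -
      have "R \<subseteq> (\<Union>j\<in>Bk. (\<lambda>(s,r). (j,s,r)) ` ({..<d j} \<times> {..<d j}))"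
        unfolding R_def valid_def by force
      moreover have "finite (\<Union>j\<in>Bk. (\<lambda>(s,r). (j,s,r)) ` ({..<d j} \<times> {..<d j}))" using finBk by simp
      ultimately show ?thesis by (rule finite_subset)
    qed
    have dec: "G d \<sigma> a a' = (\<Sum>\<rho>\<in>R. cnj (Vd d U \<rho> a) * Vd d U \<rho> a')" if "a \<in> A" "a' \<in> A" for a a'
      unfolding R_def by (rule G_dec[OF decs]) (use that finBk in \<open>auto simp: A_def\<close>)
    have herm: "G d \<sigma> a' a = cnj (G d \<sigma> a a')" if "a \<in> A" "a' \<in> A" for a a'
      using dec[OF that] dec[OF that(2,1)] by (simp add: mult.commute)
    have sA1: "fst ` S \<subseteq> A" and sA2: "snd ` S \<subseteq> A" using Sv unfolding A_def Bk_def by auto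
    define Q where "Q Z Y = (\<Sum>p\<in>S. \<Sum>q\<in>S. Z p * cnj (Y q) * G d \<sigma> (fst p) (fst q) * G d \<sigma> (snd p) (snd q))"
      for Z Y :: "'i mu \<times> 'i mu \<Rightarrow> complex"
    have pos: "Re (Q Z Z) \<ge> 0" for Z
      unfolding Q_def by (rule gram_psd[OF finS finR dec sA1 sA2])
    have expand: "Q (\<lambda>p. X p - W p) (\<lambda>p. X p - W p) = Q X X - Q X W - Q W X + Q W W"
      unfolding Q_def by (simp add: algebra_simps sum_subtractf sum.distrib)
    have hermQ: "Q W X = cnj (Q X W)"
    proof -
      have "cnj (Q X W) = (\<Sum>p\<in>S. \<Sum>q\<in>S. cnj (X p) * W q * G d \<sigma> (fst q) (fst p) * G d \<sigma> (snd q) (snd p))"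
        unfolding Q_def cnj_sum
      proof (intro sum.cong refl)
        fix p q assume "p \<in> S" "q \<in> S"
        then have "fst p \<in> A" "fst q \<in> A" "snd p \<in> A" "snd q \<in> A" using sA1 sA2 by auto
        then have h1: "G d \<sigma> (fst q) (fst p) = cnj (G d \<sigma> (fst p) (fst q))"
          and h2: "G d \<sigma> (snd q) (snd p) = cnj (G d \<sigma> (snd p) (snd q))" using herm by blast+
        show "cnj (X p * cnj (W q) * G d \<sigma> (fst p) (fst q) * G d \<sigma> (snd p) (snd q)) =
            cnj (X p) * W q * G d \<sigma> (fst q) (fst p) * G d \<sigma> (snd q) (snd p)"
          unfolding h1 h2 by simp
      qed
      also have "\<dots> = (\<Sum>q\<in>S. \<Sum>p\<in>S. cnj (X p) * W q * G d \<sigma> (fst q) (fst p) * G d \<sigma> (snd q) (snd p))"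
        by (rule sum.swap)
      also have "\<dots> = Q W X" unfolding Q_def by (simp add: mult.commute mult.left_commute)
      finally show ?thesis by simp
    qed
    have sX: "supp X \<subseteq> S" and sW: "supp W \<subseteq> S" unfolding S_def by auto
    have QXX: "ip1 d \<sigma> X X = Q X X" unfolding Q_def by (rule ip1_ext[OF finS sX sX])
    have QXW: "ip1 d \<sigma> X W = Q X W" unfolding Q_def by (rule ip1_ext[OF finS sX sW])
    have QWW: "ip1 d \<sigma> W W = Q W W" unfolding Q_def by (rule ip1_ext[OF finS sW sW])
    have i1: "Q X W = ip0 d \<sigma> y y" using ident[OF dpos df X y] QXW unfolding y_def W_def by simp
    have i2: "Q W W = ip0 d \<sigma> y y"
    proof -
      have "ip0 d \<sigma> (mult d W) y = ip1 d \<sigma> W W" using ident[OF dpos df W y] unfolding W_def by simp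
      moreover have "mult d W = y" unfolding W_def by (rule mult_Tm[OF dpos df y])
      ultimately show ?thesis using QWW by simp
    qed
    have "Re (Q (\<lambda>p. X p - W p) (\<lambda>p. X p - W p)) = Re (Q X X) - Re (ip0 d \<sigma> y y)"
      unfolding expand hermQ i1 i2 by simp
    then have le: "Re (ip0 d \<sigma> y y) \<le> Re (ip1 d \<sigma> X X)" using pos[of "\<lambda>p. X p - W p"] QXX by simp
    show "norm0 d \<sigma> (mult d X) \<le> 1 * norm1 d \<sigma> X"
      unfolding norm0_def norm1_def y_def[symmetric] using le by simp
  qed
  show ?thesis using P1 P2 P3 by blast
qed

end
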